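(* In the setting of the half-isotropic Björling construction (with data $Y_0,\hat Y_0,\psi_0,\gamma_{12}$, frame $P_1,P_2$ and the resulting functions $\mu_1,\mu_2,\rho_1,\rho_2,k_1,k_2,\gamma_{11}$ satisfying the structure equations below), let $y=[Y]$ be the resulting Willmore surface. Then $Y_0(\mathbb I)$ is a curve of umbilic points of $y$ if and only if $k_1=k_2\equiv0$ on $\mathbb I$.
   Context: Light cone model: $\mathbb R^5_1$ with $\langle x,y\rangle=-x_0y_0+\sum_{j=1}^4x_jy_j$; $\mathbb S^3$ the projectivized forward light cone. Data: $\psi_0:\mathbb I\to\mathbb S^4_1=\{\langle x,x\rangle=1\}$ non-constant real analytic; $Y_0$ a real analytic null curve with $\langle Y_0,\psi_0\rangle=\langle Y_0,\psi_0'\rangle=0$, $\langle Y_0',Y_0'\rangle=1$; $\hat Y_0$ real analytic null with $\langle\psi_0,\hat Y_0\rangle=0$, $\langle Y_0,\hat Y_0\rangle=-1$; $\gamma_{12}$ a real analytic function; unit $P_1\equiv Y_{0u}\bmod Y_0$, $P_1\perp\hat Y_0$, $P_2\perp\{\psi_0,Y_0,\hat Y_0,P_1\}$, $\det(Y_0,\hat Y_0,P_1,P_2,\psi_0)=1$; functions defined by $Y_{0u}=-\mu_1Y_0+P_1$, $\hat Y_{0u}=\mu_1\hat Y_0+\rho_1P_1+\rho_2P_2+4\gamma_{11}\psi_0$, $P_{1u}=\mu_2P_2+2k_1\psi_0+\hat Y_0+\rho_1Y_0$, $P_{2u}=-\mu_2P_1-2k_2\psi_0+\rho_2Y_0$,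 $\psi_{0u}=-2k_1P_1+2k_2P_2+4\gamma_{11}Y_0$. The resulting Willmore surface is the unique Willmore surface $y$ on a neighbourhood of $\mathbb I$ (coordinate $z=u+iv$) with canonical lift $Y$ ($\langle Y_z,Y_{\bar z}\rangle=\frac12$, $\langle Y_z,Y_z\rangle=0$) satisfying $Y|_{\mathbb I}=Y_0$, conformal Gauss map $\psi$ with $\psi|_{\mathbb I}=\psi_0$, and $\langle\psi_v|_{\mathbb I},\hat Y_0\rangle$ prescribed by $\gamma_{12}$. A point is umbilic if $\kappa=0$ there, where $Y_{zz}=-\frac s2Y+\kappa$ with $\kappa$ orthogonal to $Y,Y_z,Y_{\bar z},Y_{z\bar z}$. *)

theory Defs
  imports "HOL-Analysis.Analysis" "HOL-Library.Numeral_Type"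
begin

text \<open>Minkowski space R^5_1: coordinates indexed by type 5, index 0 is the time coordinate.\<close>

definition lor :: "real^5 \<Rightarrow> real^5 \<Rightarrow> real" where
  "lor x y = - (x$0 * y$0) + (\<Sum>j\<in>UNIV - {0}. x$j * y$j)"

definition lorC :: "complex^5 \<Rightarrow> complex^5 \<Rightarrow> complex" where
  "lorC x y = - (x$0 * y$0) + (\<Sum>j\<in>UNIV - {0}. x$j * y$j)"

definition cv :: "real^5 \<Rightarrow> complex^5" where
  "cv x = (\<chi> i. complex_of_real (x$i))"

definition real_analytic_on :: "real set \<Rightarrow> (real \<Rightarrow> 'a::real_normed_vector) \<Rightarrow> bool" where
  "real_analytic_on I f \<longleftrightarrow>
     (\<forall>x\<in>I. \<exists>r>0. \<exists>a::nat \<Rightarrow> 'a. \<forall>t. \<bar>t - x\<bar> < r \<longrightarrow> (\<lambda>n. (t - x)^n *\<^sub>R a n) sums f t)"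

fun dd :: "complex list \<Rightarrow> (complex \<Rightarrow> 'a::real_normed_vector) \<Rightarrow> complex \<Rightarrow> 'a" where
  "dd [] f = f"
| "dd (d # ds) f = (\<lambda>z. vector_derivative (\<lambda>t::real. dd ds f (z + complex_of_real t * d)) (at 0))"

definition smooth_on :: "complex set \<Rightarrow> (complex \<Rightarrow> 'a::real_normed_vector) \<Rightarrow> bool" where
  "smooth_on U f \<longleftrightarrow> open U \<and>
     (\<forall>ds d. \<forall>z\<in>U. (\<lambda>t::real. dd ds f (z + complex_of_real t * d)) differentiable (at 0)) \<and>
     (\<forall>ds. continuous_on U (dd ds f))"

definition du :: "(complex \<Rightarrow> 'a::real_normed_vector) \<Rightarrow> complex \<Rightarrow> 'a" where
  "du f z = vector_derivative (\<lambda>t::real. f (z + complex_of_real t)) (at 0)"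

definition dv :: "(complex \<Rightarrow> 'a::real_normed_vector) \<Rightarrow> complex \<Rightarrow> 'a" where
  "dv f z = vector_derivative (\<lambda>t::real. f (z + \<i> * complex_of_real t)) (at 0)"

definition Dz :: "(complex \<Rightarrow> real^5) \<Rightarrow> complex \<Rightarrow> complex^5" where
  "Dz Y z = (1/2) *s (cv (du Y z) - \<i> *s cv (dv Y z))"

definition Dzb :: "(complex \<Rightarrow> real^5) \<Rightarrow> complex \<Rightarrow> complex^5" where
  "Dzb Y z = (1/2) *s (cv (du Y z) + \<i> *s cv (dv Y z))"

definition Dzz :: "(complex \<Rightarrow> real^5) \<Rightarrow> complex \<Rightarrow> complex^5" where
  "Dzz Y z = (1/4) *s (cv (du (du Y) z) - cv (dv (dv Y) z) - (2 * \<i>) *s cv (du (dv Y) z))"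

definition Dzzb :: "(complex \<Rightarrow> real^5) \<Rightarrow> complex \<Rightarrow> complex^5" where
  "Dzzb Y z = (1/4) *s cv (du (du Y) z + dv (dv Y) z)"

definition canonical_lift_on :: "complex set \<Rightarrow> (complex \<Rightarrow> real^5) \<Rightarrow> bool" where
  "canonical_lift_on U Y \<longleftrightarrow> smooth_on U Y \<and>
     (\<forall>z\<in>U. lor (Y z) (Y z) = 0 \<and> (Y z)$0 > 0 \<and>
             lorC (Dz Y z) (Dzb Y z) = 1/2 \<and> lorC (Dz Y z) (Dz Y z) = 0)"

definition conformal_gauss_map_on :: "complex set \<Rightarrow> (complex \<Rightarrow> real^5) \<Rightarrow> (complex \<Rightarrow> real^5) \<Rightarrow> bool" where
  "conformal_gauss_map_on U Y \<psi> \<longleftrightarrow> smooth_on U \<psi> \<and>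
     (\<forall>z\<in>U. lor (\<psi> z) (\<psi> z) = 1 \<and> lor (\<psi> z) (Y z) = 0 \<and>
             lor (\<psi> z) (du Y z) = 0 \<and> lor (\<psi> z) (dv Y z) = 0 \<and>
             lor (\<psi> z) (du (du Y) z + dv (dv Y) z) = 0)"

text \<open>Willmore: the conformal Gauss map is harmonic into S^4_1, i.e. psi_{z zbar} is parallel to psi.\<close>
definition willmore_on :: "complex set \<Rightarrow> (complex \<Rightarrow> real^5) \<Rightarrow> bool" where
  "willmore_on U \<psi> \<longleftrightarrow> (\<forall>z\<in>U. \<exists>c::real. du (du \<psi>) z + dv (dv \<psi>) z = c *\<^sub>R \<psi> z)"

definition umbilic_at :: "(complex \<Rightarrow> real^5) \<Rightarrow> complex \<Rightarrow> bool" where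
  "umbilic_at Y z \<longleftrightarrow> (\<exists>s \<kappa>. Dzz Y z = (- s / 2) *s cv (Y z) + \<kappa> \<and>
      lorC \<kappa> (cv (Y z)) = 0 \<and> lorC \<kappa> (Dz Y z) = 0 \<and> lorC \<kappa> (Dzb Y z) = 0 \<and>
      lorC \<kappa> (Dzzb Y z) = 0 \<and> \<kappa> = 0)"

definition frame_mat :: "real^5 \<Rightarrow> real^5 \<Rightarrow> real^5 \<Rightarrow> real^5 \<Rightarrow> real^5 \<Rightarrow> real^5^5" where
  "frame_mat a b c d e = (\<chi> i. if i = 0 then a else if i = 1 then b else if i = 2 then c
                                  else if i = 3 then d else e)"

end

theory Submission
  imports Defs
begin


lemma univ5: "(UNIV::5 set) = {0,1,2,3,4}"
proof -
  have "{0,1,2,3,4::5} = UNIV"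
    by (rule card_subset_eq) auto
  then show ?thesis by simp
qed

lemma tmul_sum: "(transpose A *v c) = (\<Sum>i\<in>UNIV. c$i *\<^sub>R (A$i))" for A :: "real^'n^'n"
  by (simp add: vec_eq_iff matrix_vector_mult_def transpose_def sum_component mult.commute)

lemma frame_expand:
  fixes y h p1 p2 f x :: "real^5"
  assumes "det (frame_mat y h p1 p2 f) \<noteq> 0"
  shows "\<exists>c1 c2 c3 c4 c5. x = c1 *\<^sub>R y + c2 *\<^sub>R h + c3 *\<^sub>R p1 + c4 *\<^sub>R p2 + c5 *\<^sub>R f"
proof -
  define A where "A = frame_mat y h p1 p2 f"
  have "invertible (transpose A)" using assms
    by (simp add: A_def invertible_det_nz det_transpose)
  then obtain B where B: "transpose A ** B = mat 1"
    unfolding invertible_def by blast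
  have "x = transpose A *v (B *v x)"
    by (simp add: matrix_vector_mul_assoc B)
  also have "\<dots> = (\<Sum>i\<in>UNIV. (B *v x)$i *\<^sub>R (A$i))" by (rule tmul_sum)
  finally have "x = (\<Sum>i\<in>{0,1,2,3,4}. (B *v x)$i *\<^sub>R (A$i))" by (simp only: univ5)
  then show ?thesis
    by (simp add: A_def frame_mat_def add.assoc) blast
qed



lemma lor_sym: "lor x y = lor y x" by (simp add: lor_def mult.commute)
lemma lor_add_left[simp]: "lor (x + y) w = lor x w + lor y w"
  by (simp add: lor_def algebra_simps sum.distrib)
lemma lor_add_right[simp]: "lor w (x + y) = lor w x + lor w y"
  by (simp add: lor_def algebra_simps sum.distrib)
lemma lor_diff_left[simp]: "lor (x - y) w = lor x w - lor y w"
  by (simp add: lor_def algebra_simps sum_subtractf)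
lemma lor_diff_right[simp]: "lor w (x - y) = lor w x - lor w y"
  by (simp add: lor_def algebra_simps sum_subtractf)
lemma lor_minus_left[simp]: "lor (- x) w = - lor x w"
  by (simp add: lor_def sum_negf)
lemma lor_minus_right[simp]: "lor w (- x) = - lor w x"
  by (simp add: lor_def sum_negf)
lemma lor_scale_left[simp]: "lor (c *\<^sub>R x) w = c * lor x w"
  by (simp add: lor_def algebra_simps sum_distrib_left)
lemma lor_scale_right[simp]: "lor w (c *\<^sub>R x) = c * lor w x"
  by (simp add: lor_def algebra_simps sum_distrib_left)

lemma lor_symI: "lor a b = c \<Longrightarrow> lor b a = c" by (simp add: lor_sym)

locale fr =
  fixes y h p1 p2 f :: "real^5"
  assumes yy: "lor y y = 0" and yh: "lor y h = -1" and yp1: "lor y p1 = 0" and yp2: "lor y p2 = 0"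
    and yf: "lor y f = 0" and hh: "lor h h = 0" and hp1: "lor h p1 = 0" and hp2: "lor h p2 = 0"
    and hf: "lor h f = 0" and p1p1: "lor p1 p1 = 1" and p1p2: "lor p1 p2 = 0" and p1f: "lor p1 f = 0"
    and p2p2: "lor p2 p2 = 1" and p2f: "lor p2 f = 0" and ff: "lor f f = 1"
    and dt: "det (frame_mat y h p1 p2 f) \<noteq> 0"
begin

lemmas fr1 = yy yh yp1 yp2 yf hh hp1 hp2 hf p1p1 p1p2 p1f p2p2 p2f ff
lemmas frs = fr1 fr1[THEN lor_symI]

lemma expand: "x = (- lor x h) *\<^sub>R y + (- lor x y) *\<^sub>R h + (lor x p1) *\<^sub>R p1 + (lor x p2) *\<^sub>R p2 + (lor x f) *\<^sub>R f"
proof -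
  obtain c1 c2 c3 c4 c5 where x: "x = c1 *\<^sub>R y + c2 *\<^sub>R h + c3 *\<^sub>R p1 + c4 *\<^sub>R p2 + c5 *\<^sub>R f"
    using frame_expand[OF dt] by blast
  have "lor x h = - c1" "lor x y = - c2" "lor x p1 = c3" "lor x p2 = c4" "lor x f = c5"
    by (simp_all add: x frs)
  then show ?thesis using x by simp
qed

end


lemma dd_1: "dd (1 # ds) F = du (dd ds F)"
  by (rule ext) (simp add: du_def)
lemma dd_i: "dd (\<i> # ds) F = dv (dd ds F)"
  by (rule ext) (simp add: dv_def mult.commute)

definition Jm :: "real^5 \<Rightarrow> real^5" where "Jm y = (\<chi> i. if i = 0 then - y$i else y$i)"

lemma lor_inner: "lor x y = inner x (Jm y)"
proof -
  have "inner x (Jm y) = (\<Sum>i\<in>UNIV. x$i * (Jm y)$i)" by (simp add: inner_vec_def)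
  also have "\<dots> = x$0 * (Jm y)$0 + (\<Sum>i\<in>UNIV-{0}. x$i * (Jm y)$i)"
    by (simp add: sum.remove)
  also have "\<dots> = lor x y" by (simp add: lor_def Jm_def)
  finally show ?thesis by simp
qed

lemma bl_Jm: "bounded_linear Jm"
proof -
  have "linear Jm" by (rule linearI) (auto simp: Jm_def vec_eq_iff)
  then show ?thesis by (simp add: linear_conv_bounded_linear)
qed

lemma bb_lor: "bounded_bilinear lor"
proof -
  have "bounded_bilinear (\<lambda>x y. inner (id x) (Jm y))"
    using bounded_bilinear.comp[OF bounded_bilinear_inner bounded_linear_ident bl_Jm] by (simp add: id_def)
  then show ?thesis by (simp add: lor_inner[abs_def])
qed

lemma ev_line: 
  fixes z d :: complex
  assumes "open U" "z \<in> U"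
  shows "\<forall>\<^sub>F t in nhds 0. z + of_real t * d \<in> U"
proof -
  have "isCont (\<lambda>t::real. z + of_real t * d) 0" by (intro continuous_intros)
  then have "((\<lambda>t::real. z + of_real t * d) \<longlongrightarrow> z) (at 0)" by (simp add: isCont_def)
  then have "\<forall>\<^sub>F t in at 0. z + of_real t * d \<in> U" using topological_tendstoD assms by blast
  then show ?thesis using assms by (simp add: eventually_nhds_conv_at)
qed

lemma line_deriv:
  assumes "(\<lambda>t. F (z + of_real t * d)) differentiable (at 0)"
  shows "((\<lambda>t. F (z + of_real t * d)) has_vector_derivative dd [d] F z) (at 0)"
  using assms by (simp add: vector_derivative_works)

lemma lor_line_deriv:
  assumes "(\<lambda>t. A (z + of_real t * d)) differentiable (at 0)" "(\<lambda>t. B (z + of_real t * d)) differentiable (at 0)"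
  shows "((\<lambda>t. lor (A (z + of_real t * d)) (B (z + of_real t * d))) has_real_derivative
     (lor (A z) (dd [d] B z) + lor (dd [d] A z) (B z))) (at 0)"
  using bounded_bilinear.has_vector_derivative[OF bb_lor line_deriv[OF assms(1)] line_deriv[OF assms(2)]]
  by (simp add: has_real_derivative_iff_has_vector_derivative)

lemma lor_const_deriv:
  assumes "open U" "z \<in> U" "\<And>w. w \<in> U \<Longrightarrow> lor (A w) (B w) = c"
    "(\<lambda>t. A (z + of_real t * d)) differentiable (at 0)" "(\<lambda>t. B (z + of_real t * d)) differentiable (at 0)"
  shows "lor (dd [d] A z) (B z) + lor (A z) (dd [d] B z) = 0"
proof -
  have ev: "\<forall>\<^sub>F t in nhds 0. lor (A (z + of_real t * d)) (B (z + of_real t * d)) = c"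
    using ev_line[OF assms(1,2), of d] by eventually_elim (use assms(3) in auto)
  have "((\<lambda>t::real. c) has_real_derivative 0) (at 0)" by simp
  then have "((\<lambda>t. lor (A (z + of_real t * d)) (B (z + of_real t * d))) has_real_derivative 0) (at 0)"
    using DERIV_cong_ev[OF refl ev refl] by simp
  from DERIV_unique[OF lor_line_deriv[OF assms(4,5)] this] show ?thesis
    by (simp add: add.commute)
qed



lemma absarith: "\<bar>a - c\<bar> < \<bar>c - d\<bar> / 2 \<Longrightarrow> \<bar>b - d\<bar> < \<bar>c - d\<bar> / 2 \<Longrightarrow> a = b \<Longrightarrow> False"
  for a b c d :: real by (auto simp: abs_if split: if_split_asm)

lemma clairaut:
  fixes g gu gv guv gvu :: "complex \<Rightarrow> real" and U :: "complex set"
  assumes U: "open U" "z \<in> U"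
    and hu: "\<And>w. w\<in>U \<Longrightarrow> ((\<lambda>t. g (w + of_real t)) has_real_derivative gu w) (at 0)"
    and hv: "\<And>w. w\<in>U \<Longrightarrow> ((\<lambda>t. g (w + of_real t * \<i>)) has_real_derivative gv w) (at 0)"
    and huv: "\<And>w. w\<in>U \<Longrightarrow> ((\<lambda>t. gu (w + of_real t * \<i>)) has_real_derivative guv w) (at 0)"
    and hvu: "\<And>w. w\<in>U \<Longrightarrow> ((\<lambda>t. gv (w + of_real t)) has_real_derivative gvu w) (at 0)"
    and c1: "isCont guv z" and c2: "isCont gvu z"
  shows "guv z = gvu z"
proof -
  define P where "P s \<tau> = z + of_real s + of_real \<tau> * \<i>" for s \<tau> :: real
  have sh1: "((\<lambda>s. F (P s \<tau>)) has_real_derivative D) (at s0)"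
    if "((\<lambda>t. F (P s0 \<tau> + of_real t)) has_real_derivative D) (at 0)" for F D s0 \<tau>
  proof -
    have "(\<lambda>t. F (P (t + s0) \<tau>)) = (\<lambda>t. F (P s0 \<tau> + of_real t))"
      by (simp add: P_def algebra_simps)
    with that DERIV_shift[of "\<lambda>s. F (P s \<tau>)" D 0 s0] show ?thesis by simp
  qed
  have sh2: "((\<lambda>\<tau>. F (P s \<tau>)) has_real_derivative D) (at \<tau>0)"
    if "((\<lambda>t. F (P s \<tau>0 + of_real t * \<i>)) has_real_derivative D) (at 0)" for F D s \<tau>0
  proof -
    have "(\<lambda>t. F (P s (t + \<tau>0))) = (\<lambda>t. F (P s \<tau>0 + of_real t * \<i>))"
      by (simp add: P_def algebra_simps)
    with that DERIV_shift[of "\<lambda>\<tau>. F (P s \<tau>)" D 0 \<tau>0] show ?thesis by simp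
  qed
  obtain r where r: "r > 0" "ball z r \<subseteq> U" using U open_contains_ball by blast
  have distP: "dist (P s \<tau>) z \<le> \<bar>s\<bar> + \<bar>\<tau>\<bar>" for s \<tau>
  proof -
    have "dist (P s \<tau>) z = norm (of_real s + of_real \<tau> * \<i>)" by (simp add: P_def dist_norm)
    also have "\<dots> \<le> norm (of_real s :: complex) + norm (of_real \<tau> * \<i>)" by (rule norm_triangle_ineq)
    also have "\<dots> = \<bar>s\<bar> + \<bar>\<tau>\<bar>" by (simp add: norm_mult)
    finally show ?thesis .
  qed
  have inU: "P s \<tau> \<in> U" if "0 \<le> s" "s \<le> h" "0 \<le> \<tau>" "\<tau> \<le> h" "2*h < r" for s \<tau> h
  proof -
    have "dist (P s \<tau>) z < r" using distP[of s \<tau>] that by simp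
    then show ?thesis using r by (auto simp: dist_commute)
  qed
  have key: "\<exists>p1 p2. dist p1 z < 2*h \<and> dist p2 z < 2*h \<and> guv p1 = gvu p2" if h: "0 < h" "2*h < r" for h
  proof -
    define \<Delta> where "\<Delta> = g (P h h) - g (P h 0) - g (P 0 h) + g (P 0 0)"
    have "\<exists>s1. 0 < s1 \<and> s1 < h \<and> (g (P h h) - g (P h 0)) - (g (P 0 h) - g (P 0 0))
           = (h - 0) * (gu (P s1 h) - gu (P s1 0))"
    proof (rule MVT2[of 0 h "\<lambda>s. g (P s h) - g (P s 0)"])
      fix s assume "0 \<le> s" "s \<le> h"
      then have "P s h \<in> U" "P s 0 \<in> U" using inU[of s h h] inU[of s h 0] h by auto
      then show "((\<lambda>s. g (P s h) - g (P s 0)) has_real_derivative gu (P s h) - gu (P s 0)) (at s)"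
        by (intro DERIV_diff sh1 hu)
    qed (use h in auto)
    then obtain s1 where s1: "0 < s1" "s1 < h" "\<Delta> = h * (gu (P s1 h) - gu (P s1 0))"
      by (auto simp: \<Delta>_def algebra_simps)
    have "\<exists>\<tau>1. 0 < \<tau>1 \<and> \<tau>1 < h \<and> gu (P s1 h) - gu (P s1 0) = (h - 0) * guv (P s1 \<tau>1)"
    proof (rule MVT2[of 0 h "\<lambda>\<tau>. gu (P s1 \<tau>)"])
      fix \<tau> assume "0 \<le> \<tau>" "\<tau> \<le> h"
      then have "P s1 \<tau> \<in> U" using inU[of s1 h \<tau>] h s1 by auto
      then show "((\<lambda>\<tau>. gu (P s1 \<tau>)) has_real_derivative guv (P s1 \<tau>)) (at \<tau>)"
        by (intro sh2 huv)
    qed (use h in auto)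
    then obtain \<tau>1 where t1: "0 < \<tau>1" "\<tau>1 < h" "gu (P s1 h) - gu (P s1 0) = h * guv (P s1 \<tau>1)"
      by auto
    have "\<exists>\<tau>2. 0 < \<tau>2 \<and> \<tau>2 < h \<and> (g (P h h) - g (P 0 h)) - (g (P h 0) - g (P 0 0))
           = (h - 0) * (gv (P h \<tau>2) - gv (P 0 \<tau>2))"
    proof (rule MVT2[of 0 h "\<lambda>\<tau>. g (P h \<tau>) - g (P 0 \<tau>)"])
      fix \<tau> assume "0 \<le> \<tau>" "\<tau> \<le> h"
      then have "P h \<tau> \<in> U" "P 0 \<tau> \<in> U" using inU[of h h \<tau>] inU[of 0 h \<tau>] h by auto
      then show "((\<lambda>\<tau>. g (P h \<tau>) - g (P 0 \<tau>)) has_real_derivative gv (P h \<tau>) - gv (P 0 \<tau>)) (at \<tau>)"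
        by (intro DERIV_diff sh2 hv)
    qed (use h in auto)
    then obtain \<tau>2 where t2: "0 < \<tau>2" "\<tau>2 < h" "\<Delta> = h * (gv (P h \<tau>2) - gv (P 0 \<tau>2))"
      by (auto simp: \<Delta>_def algebra_simps)
    have "\<exists>s2. 0 < s2 \<and> s2 < h \<and> gv (P h \<tau>2) - gv (P 0 \<tau>2) = (h - 0) * gvu (P s2 \<tau>2)"
    proof (rule MVT2[of 0 h "\<lambda>s. gv (P s \<tau>2)"])
      fix s assume "0 \<le> s" "s \<le> h"
      then have "P s \<tau>2 \<in> U" using inU[of s h \<tau>2] h t2 by auto
      then show "((\<lambda>s. gv (P s \<tau>2)) has_real_derivative gvu (P s \<tau>2)) (at s)"
        by (intro sh1 hvu)
    qed (use h in auto)
    then obtain s2 where s2: "0 < s2" "s2 < h" "gv (P h \<tau>2) - gv (P 0 \<tau>2) = h * gvu (P s2 \<tau>2)"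
      by auto
    have "h * (h * guv (P s1 \<tau>1)) = h * (h * gvu (P s2 \<tau>2))"
      using s1(3) t1(3) t2(3) s2(3) by (metis mult.assoc)
    then have "guv (P s1 \<tau>1) = gvu (P s2 \<tau>2)" using h by simp
    moreover have "dist (P s1 \<tau>1) z < 2*h" using distP[of s1 \<tau>1] s1 t1 by simp
    moreover have "dist (P s2 \<tau>2) z < 2*h" using distP[of s2 \<tau>2] s2 t2 by simp
    ultimately show ?thesis by blast
  qed
  show ?thesis
  proof (rule ccontr)
    assume ne: "guv z \<noteq> gvu z"
    define e where "e = \<bar>guv z - gvu z\<bar> / 2"
    have e: "e > 0" using ne by (simp add: e_def)
    obtain d1 where d1: "d1 > 0" "\<And>y. dist y z < d1 \<Longrightarrow> dist (guv y) (guv z) < e"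
      using c1 e unfolding continuous_at_eps_delta by blast
    obtain d2 where d2: "d2 > 0" "\<And>y. dist y z < d2 \<Longrightarrow> dist (gvu y) (gvu z) < e"
      using c2 e unfolding continuous_at_eps_delta by blast
    define h where "h = min (min d1 d2) r / 4"
    have h: "0 < h" "2*h < r" "2*h \<le> d1" "2*h \<le> d2" using d1 d2 r by (auto simp: h_def)
    obtain p1 p2 where p: "dist p1 z < 2*h" "dist p2 z < 2*h" "guv p1 = gvu p2"
      using key[OF h(1,2)] by blast
    have "dist (guv p1) (guv z) < e" using d1(2)[of p1] p h by linarith
    moreover have "dist (gvu p2) (gvu z) < e" using d2(2)[of p2] p h by linarith
    ultimately show False using p(3) unfolding e_def dist_real_def by (rule absarith)
  qed
qed



lemma comp_deriv:
  fixes G :: "complex \<Rightarrow> real^5"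
  assumes "(\<lambda>t. G (w + of_real t * d)) differentiable (at 0)"
  shows "((\<lambda>t. G (w + of_real t * d) $ j) has_real_derivative (dd [d] G w) $ j) (at 0)"
  using bounded_linear.has_vector_derivative[OF bounded_linear_vec_nth line_deriv[OF assms]]
  by (simp add: has_real_derivative_iff_has_vector_derivative)

lemma smooth_diff:
  assumes "smooth_on U F" "w \<in> U"
  shows "(\<lambda>t. dd ds F (w + of_real t * d)) differentiable (at 0)"
  using assms unfolding smooth_on_def by blast

lemma smooth_cont:
  assumes "smooth_on U F" "w \<in> U"
  shows "isCont (dd ds F) w"
  using assms unfolding smooth_on_def by (metis continuous_on_eq_continuous_at)

lemma smooth_sym:
  fixes F :: "complex \<Rightarrow> real^5"
  assumes sm: "smooth_on U F" and z: "z \<in> U"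
  shows "dv (du F) z = du (dv F) z"
proof -
  have U: "open U" using sm by (simp add: smooth_on_def)
  have "dv (du F) z $ j = du (dv F) z $ j" for j
  proof (rule clairaut[OF U z, where g="\<lambda>w. F w $ j" and gu="\<lambda>w. du F w $ j" and gv="\<lambda>w. dv F w $ j"])
    fix w assume w: "w \<in> U"
    show "((\<lambda>t. F (w + of_real t) $ j) has_real_derivative du F w $ j) (at 0)"
      using comp_deriv[OF smooth_diff[OF sm w, of "[]" 1]] by (simp del: dd.simps(2) add: dd_1)
    show "((\<lambda>t. F (w + of_real t * \<i>) $ j) has_real_derivative dv F w $ j) (at 0)"
      using comp_deriv[OF smooth_diff[OF sm w, of "[]" \<i>]] by (simp del: dd.simps(2) add: dd_i)
    show "((\<lambda>t. du F (w + of_real t * \<i>) $ j) has_real_derivative dv (du F) w $ j) (at 0)"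
      using comp_deriv[OF smooth_diff[OF sm w, of "[1]" \<i>]] by (simp del: dd.simps(2) add: dd_i dd_1)
    show "((\<lambda>t. dv F (w + of_real t) $ j) has_real_derivative du (dv F) w $ j) (at 0)"
      using comp_deriv[OF smooth_diff[OF sm w, of "[\<i>]" 1]] by (simp del: dd.simps(2) add: dd_i dd_1)
  next
    show "isCont (\<lambda>w. dv (du F) w $ j) z"
      using smooth_cont[OF sm z, of "[\<i>, 1]"] by (simp del: dd.simps(2) add: dd_i dd_1)
    show "isCont (\<lambda>w. du (dv F) w $ j) z"
      using smooth_cont[OF sm z, of "[1, \<i>]"] by (simp del: dd.simps(2) add: dd_i dd_1)
  qed
  then show ?thesis by (simp add: vec_eq_iff)
qed



lemma LC1:
  assumes "open U" "z \<in> U" "\<And>w. w \<in> U \<Longrightarrow> lor (A w) (B w) = c"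
    "(\<lambda>t. A (z + of_real t)) differentiable (at 0)" "(\<lambda>t. B (z + of_real t)) differentiable (at 0)"
  shows "lor (du A z) (B z) + lor (A z) (du B z) = 0"
  using lor_const_deriv[OF assms(1-3), where d=1] assms(4,5) by (simp del: dd.simps(2) add: dd_1)

lemma LCi:
  assumes "open U" "z \<in> U" "\<And>w. w \<in> U \<Longrightarrow> lor (A w) (B w) = c"
    "(\<lambda>t. A (z + of_real t * \<i>)) differentiable (at 0)" "(\<lambda>t. B (z + of_real t * \<i>)) differentiable (at 0)"
  shows "lor (dv A z) (B z) + lor (A z) (dv B z) = 0"
  using lor_const_deriv[OF assms(1-3), where d=\<i>] assms(4,5) by (simp del: dd.simps(2) add: dd_i)

lemma sd1: "smooth_on U F \<Longrightarrow> w \<in> U \<Longrightarrow> (\<lambda>t. dd ds F (w + of_real t)) differentiable (at 0)"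
  using smooth_diff[of U F w ds 1] by simp
lemma sdi: "smooth_on U F \<Longrightarrow> w \<in> U \<Longrightarrow> (\<lambda>t. dd ds F (w + of_real t * \<i>)) differentiable (at 0)"
  using smooth_diff[of U F w ds \<i>] by simp

lemmas sd1_0 = sd1[of _ _ _ "[]", unfolded dd.simps(1)]
lemmas sdi_0 = sdi[of _ _ _ "[]", unfolded dd.simps(1)]
lemmas sd1_u = sd1[of _ _ _ "[1]", unfolded dd_1 dd.simps(1)]
lemmas sdi_u = sdi[of _ _ _ "[1]", unfolded dd_1 dd.simps(1)]
lemmas sd1_v = sd1[of _ _ _ "[\<i>]", unfolded dd_i dd.simps(1)]
lemmas sdi_v = sdi[of _ _ _ "[\<i>]", unfolded dd_i dd.simps(1)]

lemma lorC_add_left[simp]: "lorC (x + y) w = lorC x w + lorC y w"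
  by (simp add: lorC_def algebra_simps sum.distrib)
lemma lorC_add_right[simp]: "lorC w (x + y) = lorC w x + lorC w y"
  by (simp add: lorC_def algebra_simps sum.distrib)
lemma lorC_diff_left[simp]: "lorC (x - y) w = lorC x w - lorC y w"
  by (simp add: lorC_def algebra_simps sum_subtractf)
lemma lorC_diff_right[simp]: "lorC w (x - y) = lorC w x - lorC w y"
  by (simp add: lorC_def algebra_simps sum_subtractf)
lemma lorC_scale_left[simp]: "lorC (c *s x) w = c * lorC x w"
  by (simp add: lorC_def algebra_simps sum_distrib_left)
lemma lorC_scale_right[simp]: "lorC w (c *s x) = c * lorC w x"
  by (simp add: lorC_def algebra_simps sum_distrib_left)
lemma lorC_cv[simp]: "lorC (cv x) (cv y) = complex_of_real (lor x y)"
  by (simp add: lorC_def lor_def cv_def)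
lemma lorC_minus_right[simp]: "lorC w (- x) = - lorC w x"
  by (simp add: lorC_def sum_negf)
lemma lorC_zero[simp]: "lorC 0 w = 0"
  by (simp add: lorC_def)
lemma cv_diff: "cv (x - y) = cv x - cv y"
  by (simp add: cv_def vec_eq_iff)
lemma cv_scale: "cv (c *\<^sub>R x) = complex_of_real c *s cv x"
  by (simp add: cv_def vec_eq_iff)

lemma conf_lemma:
  assumes "lorC (Dz Y z) (Dzb Y z) = 1/2" "lorC (Dz Y z) (Dz Y z) = 0"
  shows "lor (du Y z) (du Y z) = 1 \<and> lor (dv Y z) (dv Y z) = 1 \<and> lor (du Y z) (dv Y z) = 0"
proof -
  define A where "A = lor (du Y z) (du Y z)"
  define B where "B = lor (dv Y z) (dv Y z)"
  define C where "C = lor (du Y z) (dv Y z)"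
  have s: "lor (dv Y z) (du Y z) = C" by (simp add: C_def lor_sym)
  have e1: "complex_of_real A / 2 + complex_of_real B / 2 = 1"
    using assms(1) unfolding Dz_def Dzb_def by (simp add: A_def[symmetric] B_def[symmetric] C_def[symmetric] s algebra_simps)
  have e2: "complex_of_real A - complex_of_real B - 2 * \<i> * complex_of_real C = 0"
    using assms(2) unfolding Dz_def by (simp add: A_def[symmetric] B_def[symmetric] C_def[symmetric] s algebra_simps)
  have "A / 2 + B / 2 = 1" using arg_cong[OF e1, of Re] by simp
  moreover have "A - B = 0" using arg_cong[OF e2, of Re] by simp
  moreover have "C = 0" using arg_cong[OF e2, of Im] by simp
  ultimately show ?thesis by (simp add: A_def B_def C_def)
qed



context fr begin

lemma yv_form:
  assumes "lor y v = 0" "lor p1 v = 0" "lor f v = 0" "lor v v = 1"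
  shows "(lor v p2)^2 = 1 \<and> v = (- lor v h) *\<^sub>R y + (lor v p2) *\<^sub>R p2"
proof -
  have v: "v = (- lor v h) *\<^sub>R y + (lor v p2) *\<^sub>R p2"
    using expand[of v] assms(1-3) by (simp add: lor_sym)
  have "lor v v = lor ((- lor v h) *\<^sub>R y + (lor v p2) *\<^sub>R p2) ((- lor v h) *\<^sub>R y + (lor v p2) *\<^sub>R p2)"
    using v by simp
  also have "\<dots> = (lor v p2)^2" by (simp add: frs power2_eq_square)
  finally show ?thesis using v assms(4) by simp
qed

lemma perp:
  assumes "lor y w = 0" "lor p1 w = 0" "lor p2 w = 0" "lor f w = 0"
  shows "w = (- lor w h) *\<^sub>R y"
  using expand[of w] assms by (simp add: lor_sym)

end

lemma restr_du:
  fixes F :: "complex \<Rightarrow> real^5" and F0 :: "real \<Rightarrow> real^5"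
  assumes t: "t \<in> {a<..<b}" and d: "(F0 has_vector_derivative D) (at t)"
    and eq: "\<And>s. s \<in> {a<..<b} \<Longrightarrow> F (of_real s) = F0 s"
  shows "du F (of_real t) = D"
proof -
  have "((\<lambda>s. t + s) has_real_derivative 1) (at 0)" by (auto intro!: derivative_eq_intros)
  then have h1: "((\<lambda>s. t + s) has_vector_derivative 1) (at 0)"
    by (simp add: has_real_derivative_iff_has_vector_derivative)
  have "(F0 has_vector_derivative D) (at ((\<lambda>s. t + s) 0))" using d by simp
  from vector_diff_chain_at[OF h1 this]
  have "((F0 \<circ> (\<lambda>s. t + s)) has_vector_derivative D) (at 0)" by simp
  then have "((\<lambda>s. F (of_real t + of_real s)) has_vector_derivative D) (at 0)"
  proof (rule has_vector_derivative_transform_within_open[where S="{a - t<..<b - t}"])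
    show "open {a - t<..<b - t}" by simp
    show "0 \<in> {a - t<..<b - t}" using t by simp
    fix s assume "s \<in> {a - t<..<b - t}"
    then have "t + s \<in> {a<..<b}" by auto
    then show "(F0 \<circ> (\<lambda>s. t + s)) s = F (of_real t + of_real s)"
      using eq[of "t + s"] by simp
  qed
  then show ?thesis by (simp add: du_def vector_derivative_at)
qed

theorem mainTheorem11:
  fixes a b :: real
    and Y0 Yh0 \<psi>0 P1 P2 :: "real \<Rightarrow> real^5"
    and \<gamma>12 \<mu>1 \<mu>2 \<rho>1 \<rho>2 k1 k2 \<gamma>11 :: "real \<Rightarrow> real"
    and U :: "complex set"
    and Y \<psi> :: "complex \<Rightarrow> real^5"
  assumes ab: "a < b"
    and an_psi0: "real_analytic_on {a<..<b} \<psi>0"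
    and nonconst: "\<not> (\<exists>c. \<forall>t\<in>{a<..<b}. \<psi>0 t = c)"
    and an_Y0: "real_analytic_on {a<..<b} Y0"
    and an_Yh0: "real_analytic_on {a<..<b} Yh0"
    and an_g12: "real_analytic_on {a<..<b} \<gamma>12"
    and data: "\<And>t. t \<in> {a<..<b} \<Longrightarrow>
        lor (\<psi>0 t) (\<psi>0 t) = 1 \<and>
        lor (Y0 t) (Y0 t) = 0 \<and> (Y0 t)$0 > 0 \<and>
        lor (Y0 t) (\<psi>0 t) = 0 \<and> lor (Y0 t) (vector_derivative \<psi>0 (at t)) = 0 \<and>
        lor (vector_derivative Y0 (at t)) (vector_derivative Y0 (at t)) = 1 \<and>
        lor (Yh0 t) (Yh0 t) = 0 \<and> lor (\<psi>0 t) (Yh0 t) = 0 \<and> lor (Y0 t) (Yh0 t) = -1"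
    and frame: "\<And>t. t \<in> {a<..<b} \<Longrightarrow>
        lor (P1 t) (P1 t) = 1 \<and> lor (P1 t) (Yh0 t) = 0 \<and>
        lor (P2 t) (P2 t) = 1 \<and> lor (P2 t) (\<psi>0 t) = 0 \<and> lor (P2 t) (Y0 t) = 0 \<and>
        lor (P2 t) (Yh0 t) = 0 \<and> lor (P2 t) (P1 t) = 0 \<and>
        det (frame_mat (Y0 t) (Yh0 t) (P1 t) (P2 t) (\<psi>0 t)) = 1"
    and str: "\<And>t. t \<in> {a<..<b} \<Longrightarrow>
        (Y0 has_vector_derivative (- \<mu>1 t *\<^sub>R Y0 t + P1 t)) (at t) \<and>
        (Yh0 has_vector_derivative (\<mu>1 t *\<^sub>R Yh0 t + \<rho>1 t *\<^sub>R P1 t + \<rho>2 t *\<^sub>R P2 t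
                                      + (4 * \<gamma>11 t) *\<^sub>R \<psi>0 t)) (at t) \<and>
        (P1 has_vector_derivative (\<mu>2 t *\<^sub>R P2 t + (2 * k1 t) *\<^sub>R \<psi>0 t + Yh0 t
                                     + \<rho>1 t *\<^sub>R Y0 t)) (at t) \<and>
        (P2 has_vector_derivative (- \<mu>2 t *\<^sub>R P1 t - (2 * k2 t) *\<^sub>R \<psi>0 t
                                     + \<rho>2 t *\<^sub>R Y0 t)) (at t) \<and>
        (\<psi>0 has_vector_derivative (- (2 * k1 t) *\<^sub>R P1 t + (2 * k2 t) *\<^sub>R P2 t
                                     + (4 * \<gamma>11 t) *\<^sub>R Y0 t)) (at t)"
    and U: "open U" "complex_of_real ` {a<..<b} \<subseteq> U"
    and lift: "canonical_lift_on U Y"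
    and gauss: "conformal_gauss_map_on U Y \<psi>"
    and willmore: "willmore_on U \<psi>"
    and bdY: "\<And>t. t \<in> {a<..<b} \<Longrightarrow> Y (complex_of_real t) = Y0 t"
    and bdpsi: "\<And>t. t \<in> {a<..<b} \<Longrightarrow> \<psi> (complex_of_real t) = \<psi>0 t"
    and bdg12: "\<And>t. t \<in> {a<..<b} \<Longrightarrow> lor (dv \<psi> (complex_of_real t)) (Yh0 t) = 4 * \<gamma>12 t"
  shows "(\<forall>t\<in>{a<..<b}. umbilic_at Y (complex_of_real t))
           \<longleftrightarrow> (\<forall>t\<in>{a<..<b}. k1 t = 0 \<and> k2 t = 0)"
proof -
  have smY: "smooth_on U Y" using lift by (simp add: canonical_lift_on_def)
  have smP: "smooth_on U \<psi>" using gauss by (simp add: conformal_gauss_map_on_def)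
  have lYY: "\<And>w. w \<in> U \<Longrightarrow> lor (Y w) (Y w) = 0" using lift by (simp add: canonical_lift_on_def)
  have conf: "lor (du Y w) (du Y w) = 1 \<and> lor (dv Y w) (dv Y w) = 1 \<and> lor (du Y w) (dv Y w) = 0"
    if w: "w \<in> U" for w
    using lift w by (intro conf_lemma) (auto simp: canonical_lift_on_def)
  have cuu: "\<And>w. w \<in> U \<Longrightarrow> lor (du Y w) (du Y w) = 1" using conf by blast
  have cvv: "\<And>w. w \<in> U \<Longrightarrow> lor (dv Y w) (dv Y w) = 1" using conf by blast
  have cuv: "\<And>w. w \<in> U \<Longrightarrow> lor (du Y w) (dv Y w) = 0" using conf by blast
  have gg: "lor (\<psi> w) (\<psi> w) = 1 \<and> lor (\<psi> w) (Y w) = 0 \<and> lor (\<psi> w) (du Y w) = 0 \<and>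
      lor (\<psi> w) (dv Y w) = 0 \<and> lor (\<psi> w) (du (du Y) w + dv (dv Y) w) = 0" if "w \<in> U" for w
    using gauss that by (simp add: conformal_gauss_map_on_def)
  have gY: "\<And>w. w \<in> U \<Longrightarrow> lor (\<psi> w) (Y w) = 0" using gg by blast
  have gu: "\<And>w. w \<in> U \<Longrightarrow> lor (\<psi> w) (du Y w) = 0" using gg by blast
  have gv: "\<And>w. w \<in> U \<Longrightarrow> lor (\<psi> w) (dv Y w) = 0" using gg by blast
  have gs: "\<And>w. w \<in> U \<Longrightarrow> lor (\<psi> w) (du (du Y) w + dv (dv Y) w) = 0" using gg by blast
  have la: "lor (du Y w) (Y w) = 0" if w: "w \<in> U" for w
  proof -
    have "lor (du Y w) (Y w) + lor (Y w) (du Y w) = 0"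
      by (rule LC1[OF U(1) w lYY sd1_0[OF smY w] sd1_0[OF smY w]])
    then show ?thesis by (simp add: lor_sym)
  qed
  have lb: "lor (dv Y w) (Y w) = 0" if w: "w \<in> U" for w
  proof -
    have "lor (dv Y w) (Y w) + lor (Y w) (dv Y w) = 0"
      by (rule LCi[OF U(1) w lYY sdi_0[OF smY w] sdi_0[OF smY w]])
    then show ?thesis by (simp add: lor_sym)
  qed
  have pt: "umbilic_at Y (complex_of_real t) \<longleftrightarrow> k1 t = 0 \<and> k2 t = 0" if t: "t \<in> {a<..<b}" for t
  proof -
    define z where "z = complex_of_real t"
    have z: "z \<in> U" using U(2) t z_def by auto
    have c: "lor (du (du Y) z) (Y z) = -1"
      using LC1[OF U(1) z la sd1_u[OF smY z] sd1_0[OF smY z]] cuu[OF z] by simp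
    have d: "lor (dv (dv Y) z) (Y z) = -1"
      using LCi[OF U(1) z lb sdi_v[OF smY z] sdi_0[OF smY z]] cvv[OF z] by simp
    have e: "lor (du (dv Y) z) (Y z) = 0"
      using LC1[OF U(1) z lb sd1_v[OF smY z] sd1_0[OF smY z]] cuv[OF z] by (simp add: lor_sym)
    have f: "lor (du (du Y) z) (du Y z) = 0"
      using LC1[OF U(1) z cuu sd1_u[OF smY z] sd1_u[OF smY z]] by (simp add: lor_sym)
    have g2: "lor (dv (du Y) z) (du Y z) = 0"
      using LCi[OF U(1) z cuu sdi_u[OF smY z] sdi_u[OF smY z]] by (simp add: lor_sym)
    have h2: "lor (du (dv Y) z) (dv Y z) = 0"
      using LC1[OF U(1) z cvv sd1_v[OF smY z] sd1_v[OF smY z]] by (simp add: lor_sym)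
    have j2: "lor (dv (du Y) z) (dv Y z) + lor (du Y z) (dv (dv Y) z) = 0"
      using LCi[OF U(1) z cuv sdi_u[OF smY z] sdi_v[OF smY z]] .
    have k2': "lor (du (du Y) z) (dv Y z) + lor (du Y z) (du (dv Y) z) = 0"
      using LC1[OF U(1) z cuv sd1_u[OF smY z] sd1_v[OF smY z]] .
    have l2: "lor (du \<psi> z) (dv Y z) + lor (\<psi> z) (du (dv Y) z) = 0"
      using LC1[OF U(1) z gv sd1_0[OF smP z] sd1_v[OF smY z]] .
    have m2: "lor (du \<psi> z) (du Y z) + lor (\<psi> z) (du (du Y) z) = 0"
      using LC1[OF U(1) z gu sd1_0[OF smP z] sd1_u[OF smY z]] .
    have sym: "dv (du Y) z = du (dv Y) z" by (rule smooth_sym[OF smY z])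
    have st: "(Y0 has_vector_derivative (- \<mu>1 t *\<^sub>R Y0 t + P1 t)) (at t)"
      "(\<psi>0 has_vector_derivative (- (2 * k1 t) *\<^sub>R P1 t + (2 * k2 t) *\<^sub>R P2 t + (4 * \<gamma>11 t) *\<^sub>R Y0 t)) (at t)"
      using str[OF t] by auto
    have Yz: "Y z = Y0 t" using bdY[OF t] z_def by simp
    have Pz: "\<psi> z = \<psi>0 t" using bdpsi[OF t] z_def by simp
    have Yuz: "du Y z = - \<mu>1 t *\<^sub>R Y0 t + P1 t"
      unfolding z_def by (rule restr_du[OF t st(1) bdY])
    have Puz: "du \<psi> z = - (2 * k1 t) *\<^sub>R P1 t + (2 * k2 t) *\<^sub>R P2 t + (4 * \<gamma>11 t) *\<^sub>R Y0 t"
      unfolding z_def by (rule restr_du[OF t st(2) bdpsi])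
    have dat: "lor (\<psi>0 t) (\<psi>0 t) = 1" "lor (Y0 t) (Y0 t) = 0" "lor (Y0 t) (\<psi>0 t) = 0"
      "lor (Yh0 t) (Yh0 t) = 0" "lor (\<psi>0 t) (Yh0 t) = 0" "lor (Y0 t) (Yh0 t) = -1"
      using data[OF t] by auto
    have frm: "lor (P1 t) (P1 t) = 1" "lor (P1 t) (Yh0 t) = 0" "lor (P2 t) (P2 t) = 1"
      "lor (P2 t) (\<psi>0 t) = 0" "lor (P2 t) (Y0 t) = 0" "lor (P2 t) (Yh0 t) = 0" "lor (P2 t) (P1 t) = 0"
      "det (frame_mat (Y0 t) (Yh0 t) (P1 t) (P2 t) (\<psi>0 t)) = 1"
      using frame[OF t] by auto
    have yp1: "lor (Y0 t) (P1 t) = 0"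
      using la[OF z] unfolding Yuz Yz by (simp add: dat lor_sym)
    have p1f: "lor (P1 t) (\<psi>0 t) = 0"
      using gu[OF z] unfolding Yuz Pz by (simp add: dat lor_sym)
    have FR: "fr (Y0 t) (Yh0 t) (P1 t) (P2 t) (\<psi>0 t)"
      by unfold_locales (use dat frm yp1 p1f in \<open>simp_all add: lor_sym\<close>)
    note frs = fr.frs[OF FR]
    define v where "v = dv Y z"
    have vy: "lor (Y0 t) v = 0" using lb[OF z] by (simp add: v_def Yz lor_sym)
    have vp1: "lor (P1 t) v = 0"
    proof -
      have "lor (du Y z) v = 0" using cuv[OF z] by (simp add: v_def)
      then show ?thesis unfolding Yuz using vy by simp
    qed
    have vf: "lor (\<psi>0 t) v = 0" using gv[OF z] by (simp add: v_def Pz)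
    have vv: "lor v v = 1" using cvv[OF z] by (simp add: v_def)
    define \<sigma> where "\<sigma> = lor v (P2 t)"
    have vform: "\<sigma>^2 = 1" "v = (- lor v (Yh0 t)) *\<^sub>R Y0 t + \<sigma> *\<^sub>R P2 t"
      using fr.yv_form[OF FR vy vp1 vf vv] by (auto simp: \<sigma>_def)
    have Pu_u: "lor (du \<psi> z) (du Y z) = - 2 * k1 t"
      unfolding Puz Yuz by (simp add: frs)
    have Pu_v: "lor (du \<psi> z) v = 2 * k2 t * \<sigma>"
      unfolding Puz by (subst vform(2)) (simp add: frs)
    have fuu: "lor (\<psi> z) (du (du Y) z) = 2 * k1 t" using m2 Pu_u by simp
    have fvv: "lor (\<psi> z) (dv (dv Y) z) = - 2 * k1 t" using gs[OF z] fuu by simp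
    have fuv: "lor (\<psi> z) (du (dv Y) z) = - 2 * k2 t * \<sigma>" using l2 Pu_v by (simp add: v_def)
    have Dzz_eq: "Dzz Y z = (1/4) *s (cv (du (du Y) z) - cv (dv (dv Y) z) - (2 * \<i>) *s cv (du (dv Y) z))"
      by (simp add: Dzz_def sym)
    show ?thesis
    proof
      assume "umbilic_at Y (complex_of_real t)"
      then obtain s where s: "Dzz Y z = (- s / 2) *s cv (Y z)"
        unfolding umbilic_at_def z_def by auto
      have "lorC (cv (\<psi> z)) (Dzz Y z) = 0"
        using s gY[OF z] by simp
      then have E: "complex_of_real (k1 t) + \<i> * (complex_of_real (k2 t) * complex_of_real \<sigma>) = 0"
        unfolding Dzz_eq by (simp add: fuu fvv fuv)
      have "k1 t = 0" using arg_cong[OF E, of Re] by simp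
      moreover have "k2 t * \<sigma> = 0" using arg_cong[OF E, of Im] by simp
      moreover have "\<sigma> \<noteq> 0" using vform(1) by auto
      ultimately show "k1 t = 0 \<and> k2 t = 0" by simp
    next
      assume kk: "k1 t = 0 \<and> k2 t = 0"
      define W where "W = du (du Y) z - dv (dv Y) z"
      define X where "X = du (dv Y) z"
      have p1eq: "P1 t = du Y z + \<mu>1 t *\<^sub>R Y0 t" using Yuz by simp
      have p2eq: "P2 t = \<sigma> *\<^sub>R v + (\<sigma> * lor v (Yh0 t)) *\<^sub>R Y0 t"
      proof -
        have "\<sigma> *\<^sub>R v = (- \<sigma> * lor v (Yh0 t)) *\<^sub>R Y0 t + (\<sigma>^2) *\<^sub>R P2 t"
          by (subst vform(2)) (simp add: algebra_simps power2_eq_square)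
        then show ?thesis using vform(1) by (simp add: algebra_simps)
      qed
      have Wy: "lor (Y0 t) W = 0" using c d by (simp add: W_def Yz lor_sym)
      have Wu: "lor (du Y z) W = 0"
      proof -
        have "lor (du Y z) (dv (dv Y) z) = 0" using j2 h2 sym by simp
        then show ?thesis using f by (simp add: W_def lor_sym)
      qed
      have Wv: "lor v W = 0"
      proof -
        have "lor (dv (dv Y) z) (dv Y z) = 0"
          using LCi[OF U(1) z cvv sdi_v[OF smY z] sdi_v[OF smY z]] by (simp add: lor_sym)
        moreover have "lor (du (du Y) z) (dv Y z) = 0" using k2' g2 sym by (simp add: lor_sym)
        ultimately show ?thesis by (simp add: W_def v_def lor_sym)
      qed
      have Wf: "lor (\<psi>0 t) W = 0" using fuu fvv kk by (simp add: W_def Pz)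
      have Wp1: "lor (P1 t) W = 0" unfolding p1eq using Wu Wy by simp
      have Wp2: "lor (P2 t) W = 0" unfolding p2eq using Wv Wy by simp
      have Wform: "W = (- lor W (Yh0 t)) *\<^sub>R Y0 t" by (rule fr.perp[OF FR Wy Wp1 Wp2 Wf])
      have Xy: "lor (Y0 t) X = 0" using e by (simp add: X_def Yz lor_sym)
      have Xu: "lor (du Y z) X = 0" using g2 sym by (simp add: X_def lor_sym)
      have Xv: "lor v X = 0" using h2 by (simp add: X_def v_def lor_sym)
      have Xf: "lor (\<psi>0 t) X = 0" using fuv kk by (simp add: X_def Pz)
      have Xp1: "lor (P1 t) X = 0" unfolding p1eq using Xu Xy by simp
      have Xp2: "lor (P2 t) X = 0" unfolding p2eq using Xv Xy by simp
      have Xform: "X = (- lor X (Yh0 t)) *\<^sub>R Y0 t" by (rule fr.perp[OF FR Xy Xp1 Xp2 Xf])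
      define \<alpha> where "\<alpha> = - lor W (Yh0 t)"
      define \<beta> where "\<beta> = - lor X (Yh0 t)"
      define c0 where "c0 = (1/4) * (complex_of_real \<alpha> - 2 * \<i> * complex_of_real \<beta>)"
      have "Dzz Y z = (1/4) *s (cv W - (2 * \<i>) *s cv X)"
        unfolding Dzz_eq W_def X_def by (simp add: cv_diff)
      also have "\<dots> = ((1/4) * (complex_of_real \<alpha> - 2 * \<i> * complex_of_real \<beta>)) *s cv (Y z)"
      proof -
        have Wa: "W = \<alpha> *\<^sub>R Y0 t" unfolding \<alpha>_def by (rule Wform)
        have Xb: "X = \<beta> *\<^sub>R Y0 t" unfolding \<beta>_def by (rule Xform)
        show ?thesis unfolding Wa Xb cv_scale Yz by (simp add: algebra_simps vec_eq_iff)
      qed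
      finally have D0: "Dzz Y z = c0 *s cv (Y z)" unfolding c0_def .
      have D: "Dzz Y z = (- (- 2 * c0) / 2) *s cv (Y z) + 0" by (simp add: D0)
      show "umbilic_at Y (complex_of_real t)"
        unfolding umbilic_at_def z_def[symmetric]
        by (rule exI[of _ "- 2 * c0"], rule exI[of _ 0]) (use D in simp)
    qed
  qed
  show ?thesis using pt by blast
qed


end
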